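(* Let $G$, $A$, $H$, $\beta$, $\sigma$, $\delta$ be as in the context, and let $(K,v)$ be an $\omega$-pseudo complete valued field of characteristic $0$ with residue characteristic $p$ whose value group is $A$, the smallest nonzero convex subgroup of $G$. If $f\in K(t^H,\beta)_\delta$ is nonzero, then $f$ has a multiplicative inverse in $K(t^H,\beta)_\delta$.
   Context: $G$ is an ordered abelian group, $A$ its smallest nonzero convex subgroup, $H=G/A$ with the induced order, $\rho:G\to H$ the projection; $\alpha:H\to G$ is a transversal ($\rho\alpha=\mathrm{id}_H$, $\alpha(0)=0$) and $\beta(h,h')=\alpha(h+h')-\alpha(h)-\alpha(h')\in A$. $\sigma:A\to K^\times$ is a cross-section (homomorphism with $v(\sigma(a))=a$). $\delta$ is an infinite cardinal and $K(t^H,\beta)_\delta$ is the set of formal sums $\sum_{h\in S}a_ht^h$ with $S\subseteq H$ well ordered, $|S|\le\delta$, $a_h\in K$, with coefficientwise addition and multiplication $\left(\sum a_ht^h\right)\left(\sum b_ht^h\right)=\sum_l\left(\sum_{h+h'=l}a_hb_{h'}\sigma(-\beta(h,h'))\right)t^l$. A sequence $(c_n)_{n<\omega}$ in a valued field is pseudo-Cauchy if for some $n_0$, $v(c_l-c_m)>v(c_m-c_n)$ whenever $n_0<n<m<l$; $c$ is a pseudo-limit if $v(c-c_n)=v(c_{n+1}-c_n)$ for all large $n$; $\omega$-pseudo complete means every pseudo-Cauchy sequence indexed by $\omega$ has a pseudo-limit. *)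

theory Defs
  imports Main "HOL-Library.Equipollence"
begin

definition add_subgroup :: "'g::ab_group_add set \<Rightarrow> bool" where
  "add_subgroup B \<longleftrightarrow> 0 \<in> B \<and> (\<forall>x\<in>B. \<forall>y\<in>B. x + y \<in> B) \<and> (\<forall>x\<in>B. - x \<in> B)"

definition convex_subgroup :: "'g::linordered_ab_group_add set \<Rightarrow> bool" where
  "convex_subgroup B \<longleftrightarrow> add_subgroup B \<and>
     (\<forall>x\<in>B. \<forall>y\<in>B. \<forall>z. x \<le> z \<and> z \<le> y \<longrightarrow> z \<in> B)"

definition smallest_nonzero_convex_subgroup :: "'g::linordered_ab_group_add set \<Rightarrow> bool" where
  "smallest_nonzero_convex_subgroup A \<longleftrightarrow> convex_subgroup A \<and> A \<noteq> {0} \<and>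
     (\<forall>B. convex_subgroup B \<and> B \<noteq> {0} \<longrightarrow> A \<subseteq> B)"

text \<open>H = G/A with the induced order, given as a surjective order-preserving
  homomorphism rho with kernel A (this determines H and its order up to
  isomorphism).\<close>
definition is_quotient_projection ::
  "'g::linordered_ab_group_add set \<Rightarrow> ('g \<Rightarrow> 'h::linordered_ab_group_add) \<Rightarrow> bool" where
  "is_quotient_projection A \<rho> \<longleftrightarrow>
     (\<forall>x y. \<rho> (x + y) = \<rho> x + \<rho> y) \<and> surj \<rho> \<and>
     (\<forall>x. \<rho> x = 0 \<longleftrightarrow> x \<in> A) \<and> (\<forall>x y. x \<le> y \<longrightarrow> \<rho> x \<le> \<rho> y)"

definition transversal :: "('g \<Rightarrow> 'h::zero) \<Rightarrow> ('h \<Rightarrow> 'g::zero) \<Rightarrow> bool" where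
  "transversal \<rho> \<alpha> \<longleftrightarrow> (\<forall>h. \<rho> (\<alpha> h) = h) \<and> \<alpha> 0 = 0"

definition cocycle :: "('h::ab_group_add \<Rightarrow> 'g::ab_group_add) \<Rightarrow> 'h \<Rightarrow> 'h \<Rightarrow> 'g" where
  "cocycle \<alpha> h h' = \<alpha> (h + h') - \<alpha> h - \<alpha> h'"

text \<open>A valuation on K with value group A: v is only meaningful on nonzero
  elements; v 0 is the formal value infinity (handled explicitly below).\<close>
definition valuation :: "('k::field \<Rightarrow> 'g::linordered_ab_group_add) \<Rightarrow> 'g set \<Rightarrow> bool" where
  "valuation v A \<longleftrightarrow>
     (\<forall>x y. x \<noteq> 0 \<and> y \<noteq> 0 \<longrightarrow> v (x * y) = v x + v y) \<and>
     (\<forall>x y. x \<noteq> 0 \<and> y \<noteq> 0 \<and> x + y \<noteq> 0 \<longrightarrow> min (v x) (v y) \<le> v (x + y)) \<and>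
     v ` {x. x \<noteq> 0} = A"

definition val_gt :: "('k::field \<Rightarrow> 'g::linorder) \<Rightarrow> 'k \<Rightarrow> 'k \<Rightarrow> bool" where
  "val_gt v a b \<longleftrightarrow> (a = 0 \<and> b \<noteq> 0) \<or> (a \<noteq> 0 \<and> b \<noteq> 0 \<and> v b < v a)"

definition val_eq :: "('k::field \<Rightarrow> 'g) \<Rightarrow> 'k \<Rightarrow> 'k \<Rightarrow> bool" where
  "val_eq v a b \<longleftrightarrow> (a = 0 \<and> b = 0) \<or> (a \<noteq> 0 \<and> b \<noteq> 0 \<and> v a = v b)"

definition pseudo_cauchy :: "('k::field \<Rightarrow> 'g::linorder) \<Rightarrow> (nat \<Rightarrow> 'k) \<Rightarrow> bool" where
  "pseudo_cauchy v c \<longleftrightarrow> (\<exists>n0. \<forall>n m l. n0 < n \<and> n < m \<and> m < l \<longrightarrow>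
      val_gt v (c l - c m) (c m - c n))"

definition pseudo_limit :: "('k::field \<Rightarrow> 'g) \<Rightarrow> (nat \<Rightarrow> 'k) \<Rightarrow> 'k \<Rightarrow> bool" where
  "pseudo_limit v c x \<longleftrightarrow> (\<exists>N. \<forall>n\<ge>N. val_eq v (x - c n) (c (Suc n) - c n))"

definition omega_pseudo_complete :: "('k::field \<Rightarrow> 'g::linorder) \<Rightarrow> bool" where
  "omega_pseudo_complete v \<longleftrightarrow> (\<forall>c. pseudo_cauchy v c \<longrightarrow> (\<exists>x. pseudo_limit v c x))"

definition cross_section :: "('k::field \<Rightarrow> 'g::ab_group_add) \<Rightarrow> 'g set \<Rightarrow> ('g \<Rightarrow> 'k) \<Rightarrow> bool" where
  "cross_section v A \<sigma> \<longleftrightarrow> (\<forall>a\<in>A. \<sigma> a \<noteq> 0 \<and> v (\<sigma> a) = a) \<and>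
     (\<forall>a\<in>A. \<forall>b\<in>A. \<sigma> (a + b) = \<sigma> a * \<sigma> b)"

text \<open>A formal sum is represented by its coefficient function.\<close>
definition supp :: "('h \<Rightarrow> 'k::zero) \<Rightarrow> 'h set" where
  "supp f = {h. f h \<noteq> 0}"

definition well_ordered_set :: "'h::linorder set \<Rightarrow> bool" where
  "well_ordered_set S \<longleftrightarrow> (\<forall>T. T \<subseteq> S \<and> T \<noteq> {} \<longrightarrow> (\<exists>m\<in>T. \<forall>x\<in>T. m \<le> x))"

text \<open>Elements of K(t^H,beta)_delta; the cardinal delta is represented by a set D
  of cardinality delta.\<close>
definition hahn_carrier :: "'d set \<Rightarrow> ('h::linorder \<Rightarrow> 'k::zero) set" where
  "hahn_carrier D = {f. well_ordered_set (supp f) \<and> supp f \<lesssim> D}"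

definition hahn_one :: "'h::zero \<Rightarrow> 'k::{zero,one}" where
  "hahn_one = (\<lambda>h. if h = 0 then 1 else 0)"

definition hahn_mult ::
  "('g \<Rightarrow> 'k::field) \<Rightarrow> ('h::ab_group_add \<Rightarrow> 'h \<Rightarrow> 'g::ab_group_add) \<Rightarrow>
   ('h \<Rightarrow> 'k) \<Rightarrow> ('h \<Rightarrow> 'k) \<Rightarrow> 'h \<Rightarrow> 'k" where
  "hahn_mult \<sigma> \<beta> f g l =
     (\<Sum>(h, h') \<in> {(h, h'). h \<in> supp f \<and> h' \<in> supp g \<and> h + h' = l}.
        f h * g h' * \<sigma> (- \<beta> h h'))"

end

theory Submission
  imports Defs Complex_Main
begin

unbundle cardinal_syntax

lemma wo_seq:
  fixes S :: "'h::linorder set"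
  shows "well_ordered_set S \<longleftrightarrow> \<not> (\<exists>s. (\<forall>i. s i \<in> S) \<and> (\<forall>i. s (Suc i) < s i))"
proof
  assume wo: "well_ordered_set S"
  show "\<not> (\<exists>s. (\<forall>i. s i \<in> S) \<and> (\<forall>i. s (Suc i) < s i))"
  proof
    assume "\<exists>s. (\<forall>i. s i \<in> S) \<and> (\<forall>i. s (Suc i) < s i)"
    then obtain s where s: "\<forall>i. s i \<in> S" "\<forall>i. s (Suc i) < s i" by blast
    have "range s \<subseteq> S" "range s \<noteq> {}" using s by auto
    then obtain m where "m \<in> range s" "\<forall>x\<in>range s. m \<le> x"
      using wo unfolding well_ordered_set_def by blast
    then obtain k where "m = s k" "\<forall>i. s k \<le> s i" by auto
    then show False using s(2)[rule_format, of k] by (metis not_le)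
  qed
next
  assume ns: "\<not> (\<exists>s. (\<forall>i. s i \<in> S) \<and> (\<forall>i. s (Suc i) < s i))"
  show "well_ordered_set S"
    unfolding well_ordered_set_def
  proof (rule ccontr)
    assume "\<not> (\<forall>T. T \<subseteq> S \<and> T \<noteq> {} \<longrightarrow> (\<exists>m\<in>T. \<forall>x\<in>T. m \<le> x))"
    then obtain T where T: "T \<subseteq> S" "T \<noteq> {}" "\<forall>m\<in>T. \<exists>x\<in>T. x < m"
      by (auto simp: not_le)
    then obtain nx where nx: "\<forall>m\<in>T. nx m \<in> T \<and> nx m < m" by metis
    obtain t0 where t0: "t0 \<in> T" using T by blast
    define s where "s i = (nx ^^ i) t0" for i
    have sT: "s i \<in> T" for i
      by (induction i) (auto simp: s_def t0 nx)
    have "s (Suc i) < s i" for i using nx sT[of i] by (simp add: s_def)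
    then show False using ns sT T(1) by blast
  qed
qed

lemma wo_subset: "well_ordered_set S \<Longrightarrow> T \<subseteq> S \<Longrightarrow> well_ordered_set T"
  unfolding well_ordered_set_def by blast

lemma wo_translate:
  fixes S :: "'h::linordered_ab_group_add set"
  assumes "well_ordered_set S"
  shows "well_ordered_set ((\<lambda>x. x - c) ` S)"
  using assms unfolding wo_seq
proof -
  assume ns: "\<not> (\<exists>s. (\<forall>i. s i \<in> S) \<and> (\<forall>i. s (Suc i) < s i))"
  show "\<not> (\<exists>s. (\<forall>i. s i \<in> (\<lambda>x. x - c) ` S) \<and> (\<forall>i. s (Suc i) < s i))"
  proof
    assume "\<exists>s. (\<forall>i. s i \<in> (\<lambda>x. x - c) ` S) \<and> (\<forall>i. s (Suc i) < s i)"
    then obtain s where s: "\<forall>i. s i \<in> (\<lambda>x. x - c) ` S" "\<forall>i. s (Suc i) < s i" by blast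
    have "\<forall>i. s i + c \<in> S"
    proof
      fix i obtain x where "x \<in> S" "s i = x - c" using s(1) by blast
      then show "s i + c \<in> S" by simp
    qed
    moreover have "\<forall>i. s (Suc i) + c < s i + c" using s(2) by simp
    ultimately have "\<exists>s'. (\<forall>i. s' i \<in> S) \<and> (\<forall>i. s' (Suc i) < s' i)"
      by (intro exI[of _ "\<lambda>i. s i + c"]) simp
    then show False using ns by blast
  qed
qed

lemma wo_wf:
  fixes S :: "'h::linorder set"
  assumes "well_ordered_set S"
  shows "wf {(y, x). y \<in> S \<and> x \<in> S \<and> y < x}"
proof (rule wfI_min)
  fix x :: 'h and Q assume xQ: "x \<in> Q"
  show "\<exists>z\<in>Q. \<forall>y. (y, z) \<in> {(y, x). y \<in> S \<and> x \<in> S \<and> y < x} \<longrightarrow> y \<notin> Q"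
  proof (cases "Q \<inter> S = {}")
    case True then show ?thesis using xQ by blast
  next
    case False
    then obtain m where "m \<in> Q \<inter> S" "\<forall>y\<in>Q \<inter> S. m \<le> y"
      using assms unfolding well_ordered_set_def by (meson inf_le2)
    then show ?thesis by (auto simp: not_less[symmetric])
  qed
qed

lemma wo_mono_subseq:
  fixes a :: "nat \<Rightarrow> 'h::linorder"
  assumes wo: "well_ordered_set S" and aS: "\<forall>i. a i \<in> S"
  shows "\<exists>\<phi>. strict_mono \<phi> \<and> (\<forall>i. a (\<phi> i) \<le> a (\<phi> (Suc i)))"
proof -
  obtain \<psi> where psi: "strict_mono \<psi>" "monoseq (\<lambda>n. a (\<psi> n))"
    using seq_monosub by blast
  show ?thesis
  proof (cases "\<forall>m. \<forall>n\<ge>m. a (\<psi> m) \<le> a (\<psi> n)")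
    case True then show ?thesis using psi(1) by (intro exI[of _ \<psi>]) auto
  next
    case False
    then have dec: "\<forall>m. \<forall>n\<ge>m. a (\<psi> n) \<le> a (\<psi> m)" using psi(2) unfolding monoseq_def by blast
    have "range (\<lambda>n. a (\<psi> n)) \<subseteq> S" "range (\<lambda>n. a (\<psi> n)) \<noteq> {}" using aS by auto
    then obtain m where "m \<in> range (\<lambda>n. a (\<psi> n))" "\<forall>x\<in>range (\<lambda>n. a (\<psi> n)). m \<le> x"
      using wo unfolding well_ordered_set_def by blast
    then obtain k where k: "\<forall>i. a (\<psi> k) \<le> a (\<psi> i)" by auto
    have eq: "a (\<psi> i) = a (\<psi> k)" if "i \<ge> k" for i using dec k that by (meson order_antisym)
    show ?thesis
    proof (intro exI[of _ "\<lambda>i. \<psi> (i + k)"] conjI allI)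
      show "strict_mono (\<lambda>i. \<psi> (i + k))" using psi(1) by (simp add: strict_mono_def)
      fix i show "a (\<psi> (i + k)) \<le> a (\<psi> (Suc i + k))" using eq[of "i+k"] eq[of "Suc i + k"] by simp
    qed
  qed
qed

lemma wo_antidiag_finite:
  fixes S T :: "'h::linordered_ab_group_add set"
  assumes woS: "well_ordered_set S" and woT: "well_ordered_set T"
  shows "finite {s \<in> S. l - s \<in> T}"
proof (rule ccontr)
  assume "infinite {s \<in> S. l - s \<in> T}"
  then obtain u :: "nat \<Rightarrow> 'h" where u: "inj u" "range u \<subseteq> {s \<in> S. l - s \<in> T}"
    using infinite_countable_subset by blast
  obtain \<psi> where psi: "strict_mono \<psi>" "monoseq (\<lambda>n. u (\<psi> n))"
    using seq_monosub by blast
  have ne: "u (\<psi> (Suc i)) \<noteq> u (\<psi> i)" for i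
    using u(1) psi(1) by (metis inj_eq lessI strict_mono_less n_not_Suc_n strict_mono_eq)
  show False
  proof (cases "\<forall>m. \<forall>n\<ge>m. u (\<psi> m) \<le> u (\<psi> n)")
    case True
    have "\<forall>i. l - u (\<psi> (Suc i)) < l - u (\<psi> i)"
    proof
      fix i have "u (\<psi> i) \<le> u (\<psi> (Suc i))" using True by simp
      then have "u (\<psi> i) < u (\<psi> (Suc i))" using ne[of i] by simp
      then show "l - u (\<psi> (Suc i)) < l - u (\<psi> i)" by simp
    qed
    moreover have "\<forall>i. l - u (\<psi> i) \<in> T" using u(2) by auto
    ultimately have "\<exists>s'. (\<forall>i. s' i \<in> T) \<and> (\<forall>i. s' (Suc i) < s' i)"
      by (intro exI[of _ "\<lambda>i. l - u (\<psi> i)"]) simp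
    then show False using woT unfolding wo_seq by blast
  next
    case False
    then have dec: "\<forall>m. \<forall>n\<ge>m. u (\<psi> n) \<le> u (\<psi> m)" using psi(2) unfolding monoseq_def by blast
    have "\<forall>i. u (\<psi> (Suc i)) < u (\<psi> i)"
    proof
      fix i have "u (\<psi> (Suc i)) \<le> u (\<psi> i)" using dec by simp
      then show "u (\<psi> (Suc i)) < u (\<psi> i)" using ne[of i] by simp
    qed
    moreover have "\<forall>i. u (\<psi> i) \<in> S" using u(2) by auto
    ultimately have "\<exists>s'. (\<forall>i. s' i \<in> S) \<and> (\<forall>i. s' (Suc i) < s' i)"
      by (intro exI[of _ "\<lambda>i. u (\<psi> i)"]) simp
    then show False using woS unfolding wo_seq by blast
  qed
qed


primrec nsums :: "'h::monoid_add set \<Rightarrow> nat \<Rightarrow> 'h set" where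
  "nsums P 0 = {0}"
| "nsums P (Suc n) = {a + b | a b. a \<in> P \<and> b \<in> nsums P n}"

lemma nsums_nonneg:
  fixes P :: "'h::linordered_ab_group_add set"
  assumes "\<forall>p\<in>P. 0 \<le> p"
  shows "x \<in> nsums P n \<Longrightarrow> 0 \<le> x"
  using assms by (induction n arbitrary: x) (auto intro: add_nonneg_nonneg)

lemma wo_nsums:
  fixes P :: "'h::linordered_ab_group_add set"
  assumes wo: "well_ordered_set P" and nn: "\<forall>p\<in>P. 0 \<le> p"
  shows "well_ordered_set (\<Union>n. nsums P n)"
proof -
  define N where "N = (\<Union>n. nsums P n)"
  have Nnn: "0 \<le> x" if "x \<in> N" for x using that nsums_nonneg[OF nn] unfolding N_def by blast
  define len where "len x = (LEAST n. x \<in> nsums P n)" for x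
  have dec: "\<exists>a b. a \<in> P \<and> b \<in> N \<and> x = a + b \<and> len b < len x" if xN: "x \<in> N" and xnz: "x \<noteq> 0" for x
  proof -
    have "\<exists>n. x \<in> nsums P n" using xN unfolding N_def by blast
    then have xin: "x \<in> nsums P (len x)" unfolding len_def by (rule LeastI_ex)
    then obtain m where m: "len x = Suc m" using xnz by (cases "len x") auto
    then obtain a b where ab: "a \<in> P" "b \<in> nsums P m" "x = a + b" using xin by auto
    have "len b \<le> m" unfolding len_def using ab(2) by (rule Least_le)
    then show ?thesis using ab m unfolding N_def by (intro exI[of _ a] exI[of _ b]) auto
  qed
  define bad where "bad s \<longleftrightarrow> (\<forall>i. s i \<in> N) \<and> (\<forall>i. s (Suc i) < s i)" for s :: "nat \<Rightarrow> 'h"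
  show ?thesis
    unfolding N_def[symmetric] wo_seq
  proof
    assume "\<exists>s. (\<forall>i. s i \<in> N) \<and> (\<forall>i. s (Suc i) < s i)"
    then obtain s0 where s0: "bad s0" unfolding bad_def by blast
    define F where "F = rec_nat (arg_min (\<lambda>s. len (s 0)) bad)
       (\<lambda>n Fn. arg_min (\<lambda>s. len (s (Suc n))) (\<lambda>s. bad s \<and> (\<forall>i\<le>n. s i = Fn i)))"
    have F0: "F 0 = arg_min (\<lambda>s. len (s 0)) bad" by (simp add: F_def)
    have FS: "F (Suc n) = arg_min (\<lambda>s. len (s (Suc n))) (\<lambda>s. bad s \<and> (\<forall>i\<le>n. s i = F n i))" for n
      by (simp add: F_def)
    have Fbad: "bad (F n) \<and> (\<forall>i\<le>n. F (Suc n) i = F n i)" for n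
    proof (induction n)
      case 0
      have b0: "bad (F 0)" using arg_min_nat_lemma[of bad s0 "\<lambda>s. len (s 0)"] s0 F0 by simp
      then show ?case
        using arg_min_nat_lemma[of "\<lambda>s. bad s \<and> (\<forall>i\<le>0. s i = F 0 i)" "F 0" "\<lambda>s. len (s (Suc 0))"]
        FS[of 0] by simp
    next
      case (Suc n)
      have b: "bad (F (Suc n))"
        using arg_min_nat_lemma[of "\<lambda>s. bad s \<and> (\<forall>i\<le>n. s i = F n i)" "F n" "\<lambda>s. len (s (Suc n))"]
        FS[of n] Suc by simp
      then show ?case
        using arg_min_nat_lemma[of "\<lambda>s. bad s \<and> (\<forall>i\<le>Suc n. s i = F (Suc n) i)" "F (Suc n)" "\<lambda>s. len (s (Suc (Suc n)))"]
        FS[of "Suc n"] by simp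
    qed
    define mb where "mb i = F i i" for i
    have Fmb: "i \<le> n \<Longrightarrow> F n i = mb i" for i n
    proof (induction n)
      case 0 then show ?case by (simp add: mb_def)
    next
      case (Suc n)
      then show ?case using Fbad[of n] by (cases "i = Suc n") (auto simp: mb_def)
    qed
    have mbmin: "len (mb n) \<le> len (s n)" if "bad s" "\<forall>i<n. s i = mb i" for s n
    proof (cases n)
      case 0 then show ?thesis
        using arg_min_nat_lemma[of bad s "\<lambda>s. len (s 0)"] that F0 by (simp add: mb_def)
    next
      case (Suc m)
      have "bad s \<and> (\<forall>i\<le>m. s i = F m i)" using that Fmb Suc by auto
      then show ?thesis
        using arg_min_nat_lemma[of "\<lambda>s. bad s \<and> (\<forall>i\<le>m. s i = F m i)" s "\<lambda>s. len (s (Suc m))"]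
        FS[of m] Suc by (simp add: mb_def)
    qed
    have mbN: "mb i \<in> N" for i using Fbad[of i] unfolding bad_def mb_def by blast
    have mbdec: "mb (Suc i) < mb i" for i
    proof -
      have "F (Suc i) (Suc i) < F (Suc i) i" using Fbad[of "Suc i"] unfolding bad_def by blast
      then show ?thesis using Fmb[of i "Suc i"] by (simp add: mb_def)
    qed
    have mbdec2: "i < j \<Longrightarrow> mb j < mb i" for i j
    proof (induction j)
      case 0 then show ?case by simp
    next
      case (Suc j) then show ?case using mbdec[of j] by (cases "i = j") auto
    qed
    have mbnz: "mb i \<noteq> 0" for i using mbdec[of i] Nnn[OF mbN[of "Suc i"]] by auto
    have "\<forall>i. \<exists>a t. a \<in> P \<and> t \<in> N \<and> mb i = a + t \<and> len t < len (mb i)"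
      using dec mbN mbnz by blast
    then obtain a t where at: "\<And>i. a i \<in> P \<and> t i \<in> N \<and> mb i = a i + t i \<and> len (t i) < len (mb i)"
      by metis
    obtain \<phi> where phi: "strict_mono \<phi>" "\<And>i. a (\<phi> i) \<le> a (\<phi> (Suc i))"
      using wo_mono_subseq[OF wo, of a] at by blast
    define s' where "s' i = (if i < \<phi> 0 then mb i else t (\<phi> (i - \<phi> 0)))" for i
    have "bad s'"
      unfolding bad_def
    proof (intro conjI allI)
      fix i show "s' i \<in> N" using mbN at by (simp add: s'_def)
    next
      fix i
      show "s' (Suc i) < s' i"
      proof (cases "Suc i < \<phi> 0")
        case True then show ?thesis using mbdec[of i] by (simp add: s'_def)
      next
        case F: False
        show ?thesis
        proof (cases "Suc i = \<phi> 0")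
          case True
          have "t (\<phi> 0) \<le> mb (\<phi> 0)" using at[of "\<phi> 0"] nn by auto
          then show ?thesis using True mbdec[of i] by (simp add: s'_def)
        next
          case False
          then have ige: "\<phi> 0 \<le> i" using F by simp
          define k where "k = i - \<phi> 0"
          have "Suc i - \<phi> 0 = Suc k" using ige by (simp add: k_def)
          then have e: "s' (Suc i) = t (\<phi> (Suc k))" "s' i = t (\<phi> k)" using ige by (auto simp: s'_def k_def)
          have "mb (\<phi> (Suc k)) < mb (\<phi> k)" using mbdec2 phi(1) by (simp add: strict_mono_def)
          then show ?thesis using e at[of "\<phi> k"] at[of "\<phi> (Suc k)"] phi(2)[of k]
            by (metis add_mono not_less)
        qed
      qed
    qed
    then have "len (mb (\<phi> 0)) \<le> len (s' (\<phi> 0))" using mbmin[of s' "\<phi> 0"] by (simp add: s'_def)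
    moreover have "len (t (\<phi> 0)) < len (mb (\<phi> 0))" using at[of "\<phi> 0"] by blast
    ultimately show False by (simp add: s'_def)
  qed
qed


lemma lepoll_card_of: "A \<lesssim> B \<longleftrightarrow> |A| \<le>o |B|"
  unfolding lepoll_def card_of_ordLeq[symmetric] by blast

lemma nsums_lepoll:
  fixes P :: "'h::monoid_add set" and D :: "'d set"
  assumes PD: "P \<lesssim> D" and inf: "infinite D"
  shows "(\<Union>n. nsums P n) \<lesssim> D"
proof -
  have each: "nsums P n \<lesssim> D" for n
  proof (induction n)
    case 0 then show ?case using inf by (simp add: finite_lepoll_infinite)
  next
    case (Suc n)
    have "nsums P (Suc n) = (\<lambda>(a, b). a + b) ` (P \<times> nsums P n)" by auto
    then have "nsums P (Suc n) \<lesssim> P \<times> nsums P n" by (simp add: image_lepoll)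
    moreover have "|P \<times> nsums P n| \<le>o |D|"
      using card_of_Times_ordLeq_infinite_Field[of "|D|" P "nsums P n"] inf PD Suc
      by (simp add: lepoll_card_of Field_card_of card_of_card_order_on)
    ultimately show ?case by (meson lepoll_card_of lepoll_trans)
  qed
  have "|\<Union>n. nsums P n| \<le>o |D|"
    using card_of_UNION_ordLeq_infinite[of D UNIV "nsums P"] inf each
    by (simp add: lepoll_card_of infinite_iff_card_of_nat[symmetric])
  then show ?thesis by (simp add: lepoll_card_of)
qed

lemma hahn_mult_comm:
  assumes "\<And>h h'. \<beta> h h' = \<beta> h' h"
  shows "hahn_mult \<sigma> \<beta> f g = hahn_mult \<sigma> \<beta> g f"
  unfolding hahn_mult_def
proof (rule ext)
  fix l
  show "(\<Sum>(h, h') \<in> {(h, h'). h \<in> supp f \<and> h' \<in> supp g \<and> h + h' = l}. f h * g h' * \<sigma> (- \<beta> h h')) =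
        (\<Sum>(h, h') \<in> {(h, h'). h \<in> supp g \<and> h' \<in> supp f \<and> h + h' = l}. g h * f h' * \<sigma> (- \<beta> h h'))"
    by (rule sum.reindex_bij_witness[where i=prod.swap and j=prod.swap])
       (auto simp: assms add.commute mult_ac)
qed


theorem proposition2p5:
  fixes A :: "'g::linordered_ab_group_add set"
    and \<rho> :: "'g \<Rightarrow> 'h::linordered_ab_group_add"
    and \<alpha> :: "'h \<Rightarrow> 'g"
    and v :: "'k::field_char_0 \<Rightarrow> 'g"
    and \<sigma> :: "'g \<Rightarrow> 'k"
    and D :: "'d set"
    and f :: "'h \<Rightarrow> 'k"
  assumes A: "smallest_nonzero_convex_subgroup A"
    and H: "is_quotient_projection A \<rho>"
    and alpha: "transversal \<rho> \<alpha>"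
    and val: "valuation v A"
    and complete: "omega_pseudo_complete v"
    and sigma: "cross_section v A \<sigma>"
    and delta: "infinite D"
    and f_in: "f \<in> hahn_carrier D"
    and f_nz: "f \<noteq> (\<lambda>_. 0)"
  shows "\<exists>g \<in> hahn_carrier D.
           hahn_mult \<sigma> (cocycle \<alpha>) f g = hahn_one \<and>
           hahn_mult \<sigma> (cocycle \<alpha>) g f = hahn_one"
proof -
  define \<beta> where "\<beta> = cocycle \<alpha>"
  have \<beta>sym: "\<beta> h h' = \<beta> h' h" for h h'
    unfolding \<beta>_def cocycle_def by (simp add: add.commute algebra_simps)
  have H': "(\<forall>x y. \<rho> (x + y) = \<rho> x + \<rho> y) \<and> surj \<rho> \<and>
     (\<forall>x. \<rho> x = 0 \<longleftrightarrow> x \<in> A) \<and> (\<forall>x y. x \<le> y \<longrightarrow> \<rho> x \<le> \<rho> y)"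
    using H unfolding is_quotient_projection_def .
  have radd: "\<rho> (x + y) = \<rho> x + \<rho> y" for x y using H'[THEN conjunct1] by (rule spec2)
  have rker: "\<rho> x = 0 \<Longrightarrow> x \<in> A" for x using H'[THEN conjunct2, THEN conjunct2, THEN conjunct1] by blast
  have rdiff: "\<rho> (x - y) = \<rho> x - \<rho> y" for x y
    using radd[of "x - y" y] by (simp add: algebra_simps)
  have cA: "convex_subgroup A" using A unfolding smallest_nonzero_convex_subgroup_def by (rule conjunct1)
  have aA: "add_subgroup A" using cA unfolding convex_subgroup_def by (rule conjunct1)
  have negA: "\<forall>x\<in>A. - x \<in> A" using aA unfolding add_subgroup_def by (rule conjunct2[THEN conjunct2])
  have \<beta>A: "- \<beta> h h' \<in> A" for h h'
  proof -
    have "\<rho> (\<beta> h h') = 0" using alpha unfolding \<beta>_def cocycle_def transversal_def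
      by (simp add: rdiff)
    then have "\<beta> h h' \<in> A" by (rule rker)
    then show ?thesis using negA by (rule bspec[rotated])
  qed
  have signz: "\<sigma> (- \<beta> h h') \<noteq> 0" for h h' using sigma \<beta>A unfolding cross_section_def by blast
  define S where "S = supp f"
  have woS: "well_ordered_set S" and SD: "S \<lesssim> D" using f_in unfolding hahn_carrier_def S_def by auto
  have Sne: "S \<noteq> {}" using f_nz unfolding S_def supp_def by auto
  obtain h0 where h0: "h0 \<in> S" "\<forall>x\<in>S. h0 \<le> x" using woS Sne unfolding well_ordered_set_def by blast
  have fh0: "f h0 \<noteq> 0" using h0 unfolding S_def supp_def by auto
  define P where "P = (\<lambda>h. h - h0) ` S"
  have woP: "well_ordered_set P" unfolding P_def by (rule wo_translate[OF woS])
  have Pnn: "\<forall>p\<in>P. 0 \<le> p" using h0 unfolding P_def by auto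
  have PD: "P \<lesssim> D" unfolding P_def using SD image_lepoll lepoll_trans by blast
  define N where "N = (\<Union>n. nsums P n)"
  have woN: "well_ordered_set N" unfolding N_def by (rule wo_nsums[OF woP Pnn])
  have ND: "N \<lesssim> D" unfolding N_def by (rule nsums_lepoll[OF PD delta])
  define M where "M = (\<lambda>x. x - h0) ` N"
  have woM: "well_ordered_set M" unfolding M_def by (rule wo_translate[OF woN])
  have MD: "M \<lesssim> D" unfolding M_def using ND image_lepoll lepoll_trans by blast
  have h0M: "- h0 \<in> M"
  proof -
    have "0 \<in> N" unfolding N_def by (auto intro: exI[of _ 0])
    then show ?thesis unfolding M_def by force
  qed
  have Mcl: "x + (h - h0) \<in> M" if xM: "x \<in> M" and hS: "h \<in> S" for x h
  proof -
    obtain n k where nk: "n \<in> nsums P k" "x = n - h0" using xM unfolding M_def N_def by blast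
    have "(h - h0) + n \<in> nsums P (Suc k)" using nk(1) hS unfolding P_def by auto
    then have "(h - h0) + n \<in> N" unfolding N_def by blast
    moreover have "x + (h - h0) = ((h - h0) + n) - h0" using nk(2) by (simp add: algebra_simps)
    ultimately show ?thesis unfolding M_def by blast
  qed
  have fin: "finite {h \<in> S. l - h \<in> M}" for l by (rule wo_antidiag_finite[OF woS woM])
  define R where "R = {(y, x). y \<in> M \<and> x \<in> M \<and> y < x}"
  have wfR: "wf R" unfolding R_def by (rule wo_wf[OF woM])
  define Hs where "Hs = (\<lambda>G x. if x \<in> M then
      (hahn_one (x + h0) - (\<Sum>h\<in>{h \<in> S. h0 < h \<and> x + h0 - h \<in> M}. f h * G (x + h0 - h) * \<sigma> (- \<beta> h (x + h0 - h))))
        / (f h0 * \<sigma> (- \<beta> h0 x)) else (0::'k))"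
  define g where "g = wfrec R Hs"
  have geq: "g x = Hs g x" for x
  proof -
    have "g x = Hs (cut g R x) x" unfolding g_def by (rule wfrec[OF wfR])
    also have "\<dots> = Hs g x"
    proof (cases "x \<in> M")
      case True
      have "(\<Sum>h\<in>{h \<in> S. h0 < h \<and> x + h0 - h \<in> M}. f h * cut g R x (x + h0 - h) * \<sigma> (- \<beta> h (x + h0 - h)))
          = (\<Sum>h\<in>{h \<in> S. h0 < h \<and> x + h0 - h \<in> M}. f h * g (x + h0 - h) * \<sigma> (- \<beta> h (x + h0 - h)))"
      proof (rule sum.cong[OF refl])
        fix h assume "h \<in> {h \<in> S. h0 < h \<and> x + h0 - h \<in> M}"
        then have "(x + h0 - h, x) \<in> R" using True unfolding R_def by (auto simp: algebra_simps)
        then show "f h * cut g R x (x + h0 - h) * \<sigma> (- \<beta> h (x + h0 - h)) = f h * g (x + h0 - h) * \<sigma> (- \<beta> h (x + h0 - h))"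
          by (simp add: cut_apply)
      qed
      then show ?thesis unfolding Hs_def using True by simp
    next
      case False then show ?thesis unfolding Hs_def by simp
    qed
    finally show ?thesis .
  qed
  have gout: "g x = 0" if "x \<notin> M" for x using geq[of x] that unfolding Hs_def by simp
  have grec: "f h0 * g x * \<sigma> (- \<beta> h0 x) + (\<Sum>h\<in>{h \<in> S. h0 < h \<and> x + h0 - h \<in> M}. f h * g (x + h0 - h) * \<sigma> (- \<beta> h (x + h0 - h)))
      = hahn_one (x + h0)" if xM: "x \<in> M" for x
  proof -
    have d: "f h0 * \<sigma> (- \<beta> h0 x) \<noteq> 0" using fh0 signz by simp
    have "g x = (hahn_one (x + h0) - (\<Sum>h\<in>{h \<in> S. h0 < h \<and> x + h0 - h \<in> M}. f h * g (x + h0 - h) * \<sigma> (- \<beta> h (x + h0 - h))))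
        / (f h0 * \<sigma> (- \<beta> h0 x))" using geq[of x] xM unfolding Hs_def by simp
    then show ?thesis using d by (simp add: field_simps)
  qed
  have suppg: "supp g \<subseteq> M" using gout unfolding supp_def by blast
  have g_in: "g \<in> hahn_carrier D"
    unfolding hahn_carrier_def
    using wo_subset[OF woM suppg] subset_imp_lepoll[OF suppg] MD lepoll_trans by blast
  have prod: "hahn_mult \<sigma> \<beta> f g = hahn_one"
  proof (rule ext)
    fix l
    have pairs: "{(h, h'). h \<in> supp f \<and> h' \<in> supp g \<and> h + h' = l} = (\<lambda>h. (h, l - h)) ` {h \<in> S. l - h \<in> supp g}"
      unfolding S_def by (auto simp: algebra_simps image_iff)
    have "hahn_mult \<sigma> \<beta> f g l = (\<Sum>h\<in>{h \<in> S. l - h \<in> supp g}. f h * g (l - h) * \<sigma> (- \<beta> h (l - h)))"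
      unfolding hahn_mult_def pairs by (subst sum.reindex) (auto simp: inj_on_def)
    also have "\<dots> = (\<Sum>h\<in>{h \<in> S. l - h \<in> M}. f h * g (l - h) * \<sigma> (- \<beta> h (l - h)))"
      by (rule sum.mono_neutral_left[OF fin]) (use suppg in \<open>auto simp: supp_def\<close>)
    also have "\<dots> = hahn_one l"
    proof (cases "l - h0 \<in> M")
      case True
      have eqs: "{h \<in> S. l - h \<in> M} = insert h0 {h \<in> S. h0 < h \<and> l - h0 + h0 - h \<in> M}"
        using True h0 by (auto simp: order_le_less)
      have "finite {h \<in> S. h0 < h \<and> l - h0 + h0 - h \<in> M}" using fin[of l] by (rule rev_finite_subset) auto
      then show ?thesis using grec[OF True] unfolding eqs by (simp add: sum.insert)
    next
      case False
      have emp: "{h \<in> S. l - h \<in> M} = {}"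
      proof (rule ccontr)
        assume "{h \<in> S. l - h \<in> M} \<noteq> {}"
        then obtain h where "h \<in> S" "l - h \<in> M" by blast
        then have "l - h + (h - h0) \<in> M" using Mcl by blast
        then show False using False by simp
      qed
      have "l \<noteq> 0" using False h0M by auto
      then show ?thesis unfolding emp by (simp add: hahn_one_def)
    qed
    finally show "hahn_mult \<sigma> \<beta> f g l = hahn_one l" .
  qed
  have prod2: "hahn_mult \<sigma> \<beta> g f = hahn_one"
    using prod hahn_mult_comm[of \<beta> \<sigma> g f] \<beta>sym by metis
  show ?thesis using g_in prod prod2 unfolding \<beta>_def by blast
qed

end
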